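(* Let $\mathcal B$ be a deformable family over $F_K$ (notation as in the context), with limit $\mathcal B_\infty$ and limit map $\phi:\mathcal B\to\mathcal B_\infty$. Let $U=\{\alpha_i\mid i\in I\}$ be a strong generating set for $\mathcal B_\infty$ and $T=\{a_i\mid i\in I\}\subset\mathcal B$ elements with $\phi(a_i)=\alpha_i$. Then there is a subset $S\subset\mathbb C$ with $K\subset S$ which is at most countable, such that $F_S\otimes_{F_K}\mathcal B$ is strongly generated (as a vertex algebra over $F_S$) by $\{1\otimes a_i\mid i\in I\}$.
   Context: Let $K\subset\mathbb C$ be at most countable and let $F_K$ be the $\mathbb C$-algebra of rational functions $p(\kappa)/q(\kappa)$ in a formal variable $\kappa$ with $\deg p\le\deg q$ and all roots of $q$ in $K$ (so every element has a finite limit as $\kappa\to\infty$). A deformable family is a free $F_K$-module $\mathcal B$ with a vertex algebra structure over $F_K$, graded by conformal weight $\mathcal B=\bigoplus_{m\ge0}\mathcal B[m]$ with each $\mathcal B[m]$ free of finite rank. Choosing an $F_K$-basis $\{a_i\}$ of $\mathcal B$ (homogeneous in weight), the limit $\mathcal B_\infty$ is the vertex algebra over $\mathbb C$ with basis $\{\alpha_i\}$ and products $\alpha_i\circ_n\alpha_j=\lim_{\kappa\to\infty}a_i\circ_na_j$ (i.e. if $a_i\circ_na_j=\sum_lc_l(\kappa)a_l$ then $\alpha_i\circ_n\alpha_j=\sum_lc_l(\infty)\alpha_l$); the $F_K$-linear map $\phi:\mathcal B\to\mathcal B_\infty$, $a_i\mapsto\alpha_i$ (with $\phi(f a)=f(\infty)\phi(a)$)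 preserves all circle products. A set strongly generates a vertex algebra if the algebra is spanned (over the coefficient ring) by $1$ and normally ordered monomials in elements of the set and their derivatives. *)

theory Defs
  imports Complex_Main "HOL-Computational_Algebra.Polynomial" "HOL-Computational_Algebra.Fraction_Field" "HOL-Library.Countable_Set"
begin

text \<open>Rational functions in the formal variable kappa: the fraction field of complex polynomials.\<close>
type_synonym ratfun = "complex poly fract"

definition FK :: "complex set \<Rightarrow> ratfun set" where
  "FK K = {f. \<exists>p q. q \<noteq> 0 \<and> degree p \<le> degree q \<and> (\<forall>z. poly q z = 0 \<longrightarrow> z \<in> K)
                   \<and> f = Fract p q}"

definition lim_inf :: "ratfun \<Rightarrow> complex" where
  "lim_inf f = (THE c. \<exists>p q. q \<noteq> 0 \<and> f = Fract p q \<and>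
                    ((\<lambda>z. poly p z / poly q z) \<longlongrightarrow> c) at_infinity)"

text \<open>Free module with basis indexed by 'b: finitely supported coordinate vectors with
  coefficients in R.\<close>
definition vec :: "'f::comm_ring_1 set \<Rightarrow> ('b \<Rightarrow> 'f) \<Rightarrow> bool" where
  "vec R x \<longleftrightarrow> finite {l. x l \<noteq> 0} \<and> (\<forall>l. x l \<in> R)"

text \<open>Circle products from structure constants: c n i j l is the coefficient of the l-th
  basis vector in (i-th basis vector) o_n (j-th basis vector); extended bilinearly.\<close>
definition vprod :: "(int \<Rightarrow> 'b \<Rightarrow> 'b \<Rightarrow> 'b \<Rightarrow> 'f::comm_ring_1) \<Rightarrow> int
                      \<Rightarrow> ('b \<Rightarrow> 'f) \<Rightarrow> ('b \<Rightarrow> 'f) \<Rightarrow> ('b \<Rightarrow> 'f)" where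
  "vprod c n x y = (\<lambda>l. \<Sum>i\<in>{i. x i \<noteq> 0}. \<Sum>j\<in>{j. y j \<noteq> 0}. x i * y j * c n i j l)"

definition vderiv :: "(int \<Rightarrow> 'b \<Rightarrow> 'b \<Rightarrow> 'b \<Rightarrow> 'f::comm_ring_1) \<Rightarrow> ('b \<Rightarrow> 'f)
                      \<Rightarrow> ('b \<Rightarrow> 'f) \<Rightarrow> ('b \<Rightarrow> 'f)" where
  "vderiv c vac x = vprod c (-2) x vac"

definition ibinom :: "int \<Rightarrow> nat \<Rightarrow> int" where
  "ibinom p j = (\<Prod>i<j. p - int i) div fact j"

definition sgn_pow :: "int \<Rightarrow> 'f::comm_ring_1" where
  "sgn_pow r = (if even r then 1 else -1)"

text \<open>Vertex algebra over the coefficient ring R (a subring of the field 'f), given by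
  structure constants c and vacuum vac: truncation, vacuum axioms and Borcherds identity.\<close>
definition is_VA :: "'f::comm_ring_1 set \<Rightarrow> (int \<Rightarrow> 'b \<Rightarrow> 'b \<Rightarrow> 'b \<Rightarrow> 'f) \<Rightarrow> ('b \<Rightarrow> 'f) \<Rightarrow> bool" where
  "is_VA R c vac \<longleftrightarrow>
     vec R vac \<and> (\<forall>n i j l. c n i j l \<in> R) \<and>
     (\<forall>x y. vec R x \<longrightarrow> vec R y \<longrightarrow> (\<exists>N. \<forall>n\<ge>N. vprod c n x y = (\<lambda>_. 0))) \<and>
     (\<forall>x n. vec R x \<longrightarrow> vprod c n vac x = (if n = -1 then x else (\<lambda>_. 0))) \<and>
     (\<forall>x. vec R x \<longrightarrow> vprod c (-1) x vac = x \<and> (\<forall>n\<ge>0. vprod c n x vac = (\<lambda>_. 0))) \<and>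
     (\<forall>x y z. vec R x \<longrightarrow> vec R y \<longrightarrow> vec R z \<longrightarrow>
        (\<forall>(p::int) (q::int) (r::int). \<exists>N::nat. \<forall>M\<ge>N.
          (\<lambda>l. \<Sum>j\<le>M. of_int (ibinom p j) *
                 vprod c (p + q - int j) (vprod c (r + int j) x y) z l)
        = (\<lambda>l. \<Sum>j\<le>M. (-1) ^ j * of_int (ibinom r j) *
                 (vprod c (p + r - int j) x (vprod c (q + int j) y z) l
                  - sgn_pow r * vprod c (q + r - int j) y (vprod c (p + int j) x z) l))))"

text \<open>Normally ordered monomials :d^k1 g1 ... d^kr gr: (right nested (-1)-products) in
  elements of G and their derivatives.\<close>
inductive_set nomon :: "(int \<Rightarrow> 'b \<Rightarrow> 'b \<Rightarrow> 'b \<Rightarrow> 'f::comm_ring_1) \<Rightarrow> ('b \<Rightarrow> 'f)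
                         \<Rightarrow> ('b \<Rightarrow> 'f) set \<Rightarrow> ('b \<Rightarrow> 'f) set"
  for c vac G where
  gen: "g \<in> G \<Longrightarrow> (vderiv c vac ^^ k) g \<in> nomon c vac G"
| prod: "g \<in> G \<Longrightarrow> m \<in> nomon c vac G \<Longrightarrow>
           vprod c (-1) ((vderiv c vac ^^ k) g) m \<in> nomon c vac G"

definition rspan :: "'f::comm_ring_1 set \<Rightarrow> ('b \<Rightarrow> 'f) set \<Rightarrow> ('b \<Rightarrow> 'f) set" where
  "rspan R V = {x. \<exists>A f. finite A \<and> A \<subseteq> V \<and> (\<forall>v\<in>A. f v \<in> R) \<and>
                       x = (\<lambda>l. \<Sum>v\<in>A. f v * v l)}"

definition strongly_generates ::
  "'f::comm_ring_1 set \<Rightarrow> (int \<Rightarrow> 'b \<Rightarrow> 'b \<Rightarrow> 'b \<Rightarrow> 'f) \<Rightarrow> ('b \<Rightarrow> 'f) \<Rightarrow> ('b \<Rightarrow> 'f) set \<Rightarrow> bool" where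
  "strongly_generates R c vac G \<longleftrightarrow> {x. vec R x} = rspan R (insert vac (nomon c vac G))"

text \<open>Deformable family: free F_K-module with homogeneous basis indexed by 'b (weights wt),
  each weight space of finite rank, vertex algebra structure over F_K graded by weight.\<close>
definition deformable_family :: "complex set \<Rightarrow> (int \<Rightarrow> 'b \<Rightarrow> 'b \<Rightarrow> 'b \<Rightarrow> ratfun)
                                 \<Rightarrow> ('b \<Rightarrow> ratfun) \<Rightarrow> ('b \<Rightarrow> nat) \<Rightarrow> bool" where
  "deformable_family K c vac wt \<longleftrightarrow>
     is_VA (FK K) c vac \<and> (\<forall>m. finite {i. wt i = m}) \<and>
     (\<forall>n i j l. c n i j l \<noteq> 0 \<longrightarrow> int (wt l) = int (wt i) + int (wt j) - n - 1) \<and>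
     (\<forall>l. vac l \<noteq> 0 \<longrightarrow> wt l = 0)"

definition lim_map :: "('b \<Rightarrow> ratfun) \<Rightarrow> ('b \<Rightarrow> complex)" where
  "lim_map x = (\<lambda>l. lim_inf (x l))"

definition lim_consts :: "(int \<Rightarrow> 'b \<Rightarrow> 'b \<Rightarrow> 'b \<Rightarrow> ratfun) \<Rightarrow> (int \<Rightarrow> 'b \<Rightarrow> 'b \<Rightarrow> 'b \<Rightarrow> complex)" where
  "lim_consts c = (\<lambda>n i j l. lim_inf (c n i j l))"

definition homogeneous :: "('b \<Rightarrow> nat) \<Rightarrow> ('b \<Rightarrow> 'f::zero) \<Rightarrow> bool" where
  "homogeneous wt x \<longleftrightarrow> (\<exists>m. \<forall>l. x l \<noteq> 0 \<longrightarrow> wt l = m)"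

end

theory Submission
  imports Defs "Jordan_Normal_Form.Determinant"
begin

hide_const (open) Matrix.vec



lemma at_inf_nbot: "(at_infinity :: complex filter) \<noteq> bot"
proof
  assume "(at_infinity :: complex filter) = bot"
  then have "eventually (\<lambda>_. False) (at_infinity :: complex filter)" by simp
  then obtain b where b: "\<forall>x::complex. b \<le> norm x \<longrightarrow> False" unfolding eventually_at_infinity by auto
  have "b \<le> norm (complex_of_real (\<bar>b\<bar>))" by simp
  with b show False by blast
qed

lemma ev_nz_inf: "eventually (\<lambda>z::complex. z \<noteq> 0) at_infinity"
  by (rule eventually_at_infinityI[of 1]) auto

lemma tend_scaled:
  fixes p :: "complex poly"
  assumes "degree p \<le> n"
  shows "((\<lambda>z. poly p z / z ^ n) \<longlongrightarrow> coeff p n) at_infinity"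
proof (cases "degree p = n")
  case True
  then show ?thesis using poly_divide_tendsto_aux[of p] by simp
next
  case False
  then have lt: "degree p < n" using assms by simp
  then have c0: "coeff p n = 0" by (simp add: coeff_eq_0)
  have "((\<lambda>z. (poly p z / z ^ degree p) * inverse z ^ (n - degree p)) \<longlongrightarrow> lead_coeff p * 0 ^ (n - degree p)) at_infinity"
    by (intro tendsto_mult tendsto_power poly_divide_tendsto_aux tendsto_inverse_0)
  moreover have "eventually (\<lambda>z. (poly p z / z ^ degree p) * inverse z ^ (n - degree p) = poly p z / z ^ n) at_infinity"
    using ev_nz_inf
  proof (rule eventually_mono)
    fix z :: complex assume "z \<noteq> 0"
    then show "(poly p z / z ^ degree p) * inverse z ^ (n - degree p) = poly p z / z ^ n"
      using lt by (simp add: field_simps power_add[symmetric])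
  qed
  ultimately have "((\<lambda>z. poly p z / z ^ n) \<longlongrightarrow> lead_coeff p * 0 ^ (n - degree p)) at_infinity"
    by (rule Lim_transform_eventually)
  moreover have "(0::complex) ^ (n - degree p) = 0" using lt by simp
  ultimately show ?thesis using c0 by simp
qed

lemma lim_rat:
  fixes p q :: "complex poly"
  assumes "q \<noteq> 0" "degree p \<le> degree q"
  shows "((\<lambda>z. poly p z / poly q z) \<longlongrightarrow> coeff p (degree q) / lead_coeff q) at_infinity"
proof -
  have "((\<lambda>z. (poly p z / z ^ degree q) / (poly q z / z ^ degree q)) \<longlongrightarrow> coeff p (degree q) / lead_coeff q) at_infinity"
    using assms by (intro tendsto_divide tend_scaled) auto
  moreover have "eventually (\<lambda>z. (poly p z / z ^ degree q) / (poly q z / z ^ degree q) = poly p z / poly q z) at_infinity"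
    using ev_nz_inf by (rule eventually_mono) (simp add: field_simps)
  ultimately show ?thesis by (rule Lim_transform_eventually)
qed

lemma ev_poly_nz:
  fixes q :: "complex poly"
  assumes "q \<noteq> 0"
  shows "eventually (\<lambda>z. poly q z \<noteq> 0) at_infinity"
proof -
  have "((\<lambda>z. poly q z / z ^ degree q) \<longlongrightarrow> lead_coeff q) at_infinity"
    by (rule poly_divide_tendsto_aux)
  then have "eventually (\<lambda>z. poly q z / z ^ degree q \<noteq> 0) at_infinity"
    using assms by (intro tendsto_imp_eventually_ne) auto
  then show ?thesis by (rule eventually_mono) auto
qed

lemma lim_inf_eq:
  assumes "Q \<noteq> 0" "((\<lambda>z. poly P z / poly Q z) \<longlongrightarrow> c) at_infinity"
  shows "lim_inf (Fract P Q) = c"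
  unfolding lim_inf_def
proof (rule the_equality)
  show "\<exists>p q. q \<noteq> 0 \<and> Fract P Q = Fract p q \<and> ((\<lambda>z. poly p z / poly q z) \<longlongrightarrow> c) at_infinity"
    apply (rule exI[of _ P], rule exI[of _ Q]) using assms by simp
next
  fix c' assume "\<exists>p q. q \<noteq> 0 \<and> Fract P Q = Fract p q \<and> ((\<lambda>z. poly p z / poly q z) \<longlongrightarrow> c') at_infinity"
  then obtain p q where q: "q \<noteq> 0" and e: "Fract P Q = Fract p q"
    and t: "((\<lambda>z. poly p z / poly q z) \<longlongrightarrow> c') at_infinity" by blast
  have pq: "P * q = p * Q" using e q assms(1) by (simp add: eq_fract)
  have "eventually (\<lambda>z. poly p z / poly q z = poly P z / poly Q z) at_infinity"
    using eventually_conj[OF ev_poly_nz[OF q] ev_poly_nz[OF assms(1)]]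
  proof (rule eventually_mono)
    fix z assume z: "poly q z \<noteq> 0 \<and> poly Q z \<noteq> 0"
    have "poly P z * poly q z = poly p z * poly Q z" using arg_cong[OF pq, of "\<lambda>r. poly r z"] by simp
    with z show "poly p z / poly q z = poly P z / poly Q z" by (simp add: field_simps)
  qed
  then have "((\<lambda>z. poly P z / poly Q z) \<longlongrightarrow> c') at_infinity" by (rule Lim_transform_eventually[OF t])
  then show "c' = c" by (rule tendsto_unique[OF at_inf_nbot _ assms(2)])
qed

lemma FK_E:
  assumes "f \<in> FK K"
  obtains p q where "q \<noteq> 0" "degree p \<le> degree q" "\<forall>z. poly q z = 0 \<longrightarrow> z \<in> K" "f = Fract p q"
    "((\<lambda>z. poly p z / poly q z) \<longlongrightarrow> lim_inf f) at_infinity" "lim_inf f = coeff p (degree q) / lead_coeff q"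
proof -
  from assms obtain p q where h: "q \<noteq> 0" "degree p \<le> degree q" "\<forall>z. poly q z = 0 \<longrightarrow> z \<in> K" "f = Fract p q"
    unfolding FK_def by blast
  have t: "((\<lambda>z. poly p z / poly q z) \<longlongrightarrow> coeff p (degree q) / lead_coeff q) at_infinity"
    using lim_rat[OF h(1) h(2)] .
  have l: "lim_inf f = coeff p (degree q) / lead_coeff q" using lim_inf_eq[OF h(1) t] h(4) by simp
  from t have t': "((\<lambda>z. poly p z / poly q z) \<longlongrightarrow> lim_inf f) at_infinity" by (simp only: l)
  show ?thesis by (rule that[OF h t' l])
qed

lemma FK_mono: "K \<subseteq> S \<Longrightarrow> FK K \<subseteq> FK S"
  unfolding FK_def by blast

lemma FK_add:
  assumes "f \<in> FK K" "g \<in> FK K"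
  shows "f + g \<in> FK K \<and> lim_inf (f + g) = lim_inf f + lim_inf g"
proof -
  obtain p q where f: "q \<noteq> 0" "degree p \<le> degree q" "\<forall>z. poly q z = 0 \<longrightarrow> z \<in> K" "f = Fract p q"
    "((\<lambda>z. poly p z / poly q z) \<longlongrightarrow> lim_inf f) at_infinity" "lim_inf f = coeff p (degree q) / lead_coeff q" by (rule FK_E[OF assms(1)])
  obtain p' q' where g: "q' \<noteq> 0" "degree p' \<le> degree q'" "\<forall>z. poly q' z = 0 \<longrightarrow> z \<in> K" "g = Fract p' q'"
    "((\<lambda>z. poly p' z / poly q' z) \<longlongrightarrow> lim_inf g) at_infinity" "lim_inf g = coeff p' (degree q') / lead_coeff q'" by (rule FK_E[OF assms(2)])
  have fg: "f + g = Fract (p * q' + p' * q) (q * q')" using f(1,4) g(1,4) by simp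
  have qq: "q * q' \<noteq> 0" using f(1) g(1) by simp
  have d1: "degree (p * q') \<le> degree q + degree q'" using degree_mult_le[of p q'] f(2) by linarith
  have d2: "degree (p' * q) \<le> degree q + degree q'" using degree_mult_le[of p' q] g(2) by linarith
  have deg: "degree (p * q' + p' * q) \<le> degree (q * q')"
    using degree_add_le[OF d1 d2] by (simp add: degree_mult_eq f(1) g(1))
  have roots: "\<forall>z. poly (q * q') z = 0 \<longrightarrow> z \<in> K" using f(3) g(3) by auto
  have t: "((\<lambda>z. poly p z / poly q z + poly p' z / poly q' z) \<longlongrightarrow> lim_inf f + lim_inf g) at_infinity"
    by (rule tendsto_add[OF f(5) g(5)])
  have "eventually (\<lambda>z. poly p z / poly q z + poly p' z / poly q' z = poly (p * q' + p' * q) z / poly (q * q') z) at_infinity"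
    using eventually_conj[OF ev_poly_nz[OF f(1)] ev_poly_nz[OF g(1)]]
    by (rule eventually_mono) (simp add: field_simps)
  with t have "((\<lambda>z. poly (p * q' + p' * q) z / poly (q * q') z) \<longlongrightarrow> lim_inf f + lim_inf g) at_infinity"
    by (rule Lim_transform_eventually)
  then have "lim_inf (f + g) = lim_inf f + lim_inf g" using lim_inf_eq[OF qq] fg by simp
  moreover have "f + g \<in> FK K" unfolding FK_def using fg qq deg roots by blast
  ultimately show ?thesis by simp
qed

lemma FK_mult:
  assumes "f \<in> FK K" "g \<in> FK K"
  shows "f * g \<in> FK K \<and> lim_inf (f * g) = lim_inf f * lim_inf g"
proof -
  obtain p q where f: "q \<noteq> 0" "degree p \<le> degree q" "\<forall>z. poly q z = 0 \<longrightarrow> z \<in> K" "f = Fract p q"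
    "((\<lambda>z. poly p z / poly q z) \<longlongrightarrow> lim_inf f) at_infinity" "lim_inf f = coeff p (degree q) / lead_coeff q" by (rule FK_E[OF assms(1)])
  obtain p' q' where g: "q' \<noteq> 0" "degree p' \<le> degree q'" "\<forall>z. poly q' z = 0 \<longrightarrow> z \<in> K" "g = Fract p' q'"
    "((\<lambda>z. poly p' z / poly q' z) \<longlongrightarrow> lim_inf g) at_infinity" "lim_inf g = coeff p' (degree q') / lead_coeff q'" by (rule FK_E[OF assms(2)])
  have fg: "f * g = Fract (p * p') (q * q')" using f(1,4) g(1,4) by simp
  have qq: "q * q' \<noteq> 0" using f(1) g(1) by simp
  have deg: "degree (p * p') \<le> degree (q * q')"
    using degree_mult_le[of p p'] f(2) g(2) by (simp add: degree_mult_eq f(1) g(1))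
  have roots: "\<forall>z. poly (q * q') z = 0 \<longrightarrow> z \<in> K" using f(3) g(3) by auto
  have t: "((\<lambda>z. poly p z / poly q z * (poly p' z / poly q' z)) \<longlongrightarrow> lim_inf f * lim_inf g) at_infinity"
    by (rule tendsto_mult[OF f(5) g(5)])
  have "eventually (\<lambda>z. poly p z / poly q z * (poly p' z / poly q' z) = poly (p * p') z / poly (q * q') z) at_infinity"
    by (rule always_eventually) simp
  with t have "((\<lambda>z. poly (p * p') z / poly (q * q') z) \<longlongrightarrow> lim_inf f * lim_inf g) at_infinity"
    by (rule Lim_transform_eventually)
  then have "lim_inf (f * g) = lim_inf f * lim_inf g" using lim_inf_eq[OF qq] fg by simp
  moreover have "f * g \<in> FK K" unfolding FK_def using fg qq deg roots by blast
  ultimately show ?thesis by simp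
qed

lemma FK_uminus:
  assumes "f \<in> FK K"
  shows "- f \<in> FK K \<and> lim_inf (- f) = - lim_inf f"
proof -
  obtain p q where f: "q \<noteq> 0" "degree p \<le> degree q" "\<forall>z. poly q z = 0 \<longrightarrow> z \<in> K" "f = Fract p q"
    "((\<lambda>z. poly p z / poly q z) \<longlongrightarrow> lim_inf f) at_infinity" "lim_inf f = coeff p (degree q) / lead_coeff q" by (rule FK_E[OF assms(1)])
  have e: "- f = Fract (- p) q" using f(4) by simp
  have t: "((\<lambda>z. poly (- p) z / poly q z) \<longlongrightarrow> - lim_inf f) at_infinity"
    using tendsto_minus[OF f(5)] by simp
  have "lim_inf (- f) = - lim_inf f" using lim_inf_eq[OF f(1) t] e by simp
  moreover have "- f \<in> FK K" unfolding FK_def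
    by (rule CollectI, rule exI[of _ "- p"], rule exI[of _ q]) (use e f(1,2,3) in simp)
  ultimately show ?thesis by simp
qed

lemma FK_const: "Fract [:z:] 1 \<in> FK K \<and> lim_inf (Fract [:z:] 1) = z"
proof -
  have "lim_inf (Fract [:z:] 1) = z" by (rule lim_inf_eq) auto
  moreover have "Fract [:z:] 1 \<in> FK K" unfolding FK_def by (rule CollectI, rule exI[of _ "[:z:]"], rule exI[of _ 1]) simp
  ultimately show ?thesis by simp
qed

lemma FK_zero: "0 \<in> FK K \<and> lim_inf 0 = 0"
  using FK_const[of 0 K] by (simp add: Zero_fract_def)

lemma FK_one: "1 \<in> FK K \<and> lim_inf 1 = 1"
  using FK_const[of 1 K] by (simp add: One_fract_def one_pCons[symmetric])

lemma FK_of_nat: "of_nat n \<in> FK K \<and> lim_inf (of_nat n) = of_nat n"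
proof (induction n)
  case 0 then show ?case using FK_zero by simp
next
  case (Suc n)
  then show ?case using FK_add[OF conjunct1[OF FK_one] conjunct1[OF Suc]] FK_one by simp
qed

lemma FK_of_int: "of_int k \<in> FK K \<and> lim_inf (of_int k) = of_int k"
proof (cases k rule: int_cases)
  case (nonneg n) then show ?thesis using FK_of_nat[of n K] by simp
next
  case (neg n) then show ?thesis using FK_uminus[OF conjunct1[OF FK_of_nat[of "Suc n" K]]] FK_of_nat[of "Suc n" K]
    by simp
qed

lemma FK_sum:
  assumes "finite A" "\<forall>x\<in>A. f x \<in> FK K"
  shows "sum f A \<in> FK K \<and> lim_inf (sum f A) = (\<Sum>x\<in>A. lim_inf (f x))"
  using assms
proof (induction A rule: finite_induct)
  case empty then show ?case using FK_zero by simp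
next
  case (insert x F)
  then show ?case using FK_add[of "f x" K "sum f F"] by simp
qed

lemma FK_prod:
  assumes "finite A" "\<forall>x\<in>A. f x \<in> FK K"
  shows "prod f A \<in> FK K \<and> lim_inf (prod f A) = (\<Prod>x\<in>A. lim_inf (f x))"
  using assms
proof (induction A rule: finite_induct)
  case empty then show ?case using FK_one by simp
next
  case (insert x F)
  then show ?case using FK_mult[of "f x" K "prod f F"] by simp
qed

lemma FK_inv:
  assumes "f \<in> FK K" "lim_inf f \<noteq> 0"
  shows "\<exists>Z. finite Z \<and> inverse f \<in> FK (K \<union> Z)"
proof -
  obtain p q where f: "q \<noteq> 0" "degree p \<le> degree q" "\<forall>z. poly q z = 0 \<longrightarrow> z \<in> K" "f = Fract p q"
    "((\<lambda>z. poly p z / poly q z) \<longlongrightarrow> lim_inf f) at_infinity" "lim_inf f = coeff p (degree q) / lead_coeff q" by (rule FK_E[OF assms(1)])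
  have c: "coeff p (degree q) \<noteq> 0" using assms(2) f(6) by auto
  hence dp: "degree q \<le> degree p" by (rule le_degree)
  have p0: "p \<noteq> 0" using c by auto
  have "inverse f = Fract q p" using f(4) by simp
  moreover have "Fract q p \<in> FK (K \<union> {z. poly p z = 0})" unfolding FK_def using p0 dp f(1) by blast
  ultimately show ?thesis using poly_roots_finite[OF p0] by auto
qed


definition sr :: "'f::comm_ring_1 set \<Rightarrow> bool" where
  "sr R \<longleftrightarrow> 0 \<in> R \<and> 1 \<in> R \<and> (\<forall>x\<in>R. \<forall>y\<in>R. x + y \<in> R \<and> x * y \<in> R \<and> - x \<in> R)"

lemma sr_FK: "sr (FK K)"
  unfolding sr_def by (intro conjI ballI) (simp_all add: FK_zero FK_one FK_add FK_mult FK_uminus)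

lemma sr_0: "sr R \<Longrightarrow> 0 \<in> R" unfolding sr_def by simp
lemma sr_add: "sr R \<Longrightarrow> x \<in> R \<Longrightarrow> y \<in> R \<Longrightarrow> x + y \<in> R" unfolding sr_def by simp
lemma sr_mult: "sr R \<Longrightarrow> x \<in> R \<Longrightarrow> y \<in> R \<Longrightarrow> x * y \<in> R" unfolding sr_def by simp

lemma sr_sum: assumes "sr R" "\<forall>x\<in>A. f x \<in> R" shows "sum f A \<in> R"
proof (cases "finite A")
  case True then show ?thesis using assms(2)
    by (induction A rule: finite_induct) (simp_all add: sr_0[OF assms(1)] sr_add[OF assms(1)])
next
  case False then show ?thesis using sr_0[OF assms(1)] by simp
qed

lemma vec_mono: "R \<subseteq> R' \<Longrightarrow> vec R x \<Longrightarrow> vec R' x"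
  unfolding Defs.vec_def by blast

lemma rspan_zero: "sr R \<Longrightarrow> (\<lambda>_. 0) \<in> rspan R V"
  unfolding rspan_def by (rule CollectI, rule exI[of _ "{}"], rule exI[of _ "\<lambda>_. 0"]) simp

lemma rspan_base: "sr R \<Longrightarrow> v \<in> V \<Longrightarrow> v \<in> rspan R V"
  unfolding rspan_def sr_def by (rule CollectI, rule exI[of _ "{v}"], rule exI[of _ "\<lambda>_. 1"]) simp

lemma rspan_mono: "R \<subseteq> R' \<Longrightarrow> rspan R V \<subseteq> rspan R' V"
  unfolding rspan_def by blast

lemma rspan_add:
  assumes "sr R" "x \<in> rspan R V" "y \<in> rspan R V"
  shows "(\<lambda>l. x l + y l) \<in> rspan R V"
proof -
  obtain A f where A: "finite A" "A \<subseteq> V" "\<forall>v\<in>A. f v \<in> R" "x = (\<lambda>l. \<Sum>v\<in>A. f v * v l)"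
    using assms(2) unfolding rspan_def by blast
  obtain B g where B: "finite B" "B \<subseteq> V" "\<forall>v\<in>B. g v \<in> R" "y = (\<lambda>l. \<Sum>v\<in>B. g v * v l)"
    using assms(3) unfolding rspan_def by blast
  define h where "h v = (if v \<in> A then f v else 0) + (if v \<in> B then g v else 0)" for v
  have hR: "\<forall>v\<in>A\<union>B. h v \<in> R" using A(3) B(3) assms(1) unfolding h_def sr_def by auto
  have eq: "(\<lambda>l. x l + y l) = (\<lambda>l. \<Sum>v\<in>A\<union>B. h v * v l)"
  proof
    fix l
    have "(\<Sum>v\<in>A\<union>B. h v * v l) = (\<Sum>v\<in>A\<union>B. (if v\<in>A then f v * v l else 0) + (if v \<in> B then g v * v l else 0))"
      by (rule sum.cong) (auto simp: h_def algebra_simps)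
    also have "\<dots> = (\<Sum>v\<in>A\<union>B. (if v\<in>A then f v * v l else 0)) + (\<Sum>v\<in>A\<union>B. (if v \<in> B then g v * v l else 0))"
      by (rule sum.distrib)
    also have "(\<Sum>v\<in>A\<union>B. (if v\<in>A then f v * v l else 0)) = (\<Sum>v\<in>A. f v * v l)"
      by (rule sum.mono_neutral_cong_right) (use A B in auto)
    also have "(\<Sum>v\<in>A\<union>B. (if v\<in>B then g v * v l else 0)) = (\<Sum>v\<in>B. g v * v l)"
      by (rule sum.mono_neutral_cong_right) (use A B in auto)
    finally show "x l + y l = (\<Sum>v\<in>A\<union>B. h v * v l)" using A(4) B(4) by simp
  qed
  show ?thesis unfolding rspan_def
    by (rule CollectI, rule exI[of _ "A \<union> B"], rule exI[of _ h]) (use A B hR eq in simp)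
qed

lemma rspan_smult:
  assumes "sr R" "r \<in> R" "x \<in> rspan R V"
  shows "(\<lambda>l. r * x l) \<in> rspan R V"
proof -
  obtain A f where A: "finite A" "A \<subseteq> V" "\<forall>v\<in>A. f v \<in> R" "x = (\<lambda>l. \<Sum>v\<in>A. f v * v l)"
    using assms(3) unfolding rspan_def by blast
  have eq: "(\<lambda>l. r * x l) = (\<lambda>l. \<Sum>v\<in>A. (r * f v) * v l)"
    using A(4) by (simp add: sum_distrib_left mult.assoc)
  have "\<forall>v\<in>A. r * f v \<in> R" using A(3) assms(1,2) sr_mult by blast
  then show ?thesis unfolding rspan_def
    by (intro CollectI exI[of _ A] exI[of _ "\<lambda>v. r * f v"]) (use A eq in simp)
qed

lemma rspan_sum:
  assumes "sr R" "finite B" "\<forall>k\<in>B. g k \<in> R" "\<forall>k\<in>B. u k \<in> rspan R V"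
  shows "(\<lambda>l. \<Sum>k\<in>B. g k * u k l) \<in> rspan R V"
  using assms(2,3,4)
proof (induction B rule: finite_induct)
  case empty then show ?case using rspan_zero[OF assms(1)] by simp
next
  case (insert x F)
  have "(\<lambda>l. g x * u x l + (\<Sum>k\<in>F. g k * u k l)) \<in> rspan R V"
    using rspan_add[OF assms(1) rspan_smult[OF assms(1)] insert.IH] insert.prems by simp
  then show ?case using insert.hyps by simp
qed

lemma rspan_vec:
  assumes R: "sr R" and V: "\<forall>v\<in>V. vec R v" and x: "x \<in> rspan R V"
  shows "vec R x"
proof -
  obtain A f where A: "finite A" "A \<subseteq> V" "\<forall>v\<in>A. f v \<in> R" "x = (\<lambda>l. \<Sum>v\<in>A. f v * v l)"
    using x unfolding rspan_def by blast
  have "{l. x l \<noteq> 0} \<subseteq> (\<Union>v\<in>A. {l. v l \<noteq> 0})"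
  proof
    fix l assume "l \<in> {l. x l \<noteq> 0}"
    then have "(\<Sum>v\<in>A. f v * v l) \<noteq> 0" using A(4) by simp
    then obtain v where "v \<in> A" "f v * v l \<noteq> 0" by (rule sum.not_neutral_contains_not_neutral)
    then show "l \<in> (\<Union>v\<in>A. {l. v l \<noteq> 0})" by (cases "v l = 0") auto
  qed
  moreover have "finite (\<Union>v\<in>A. {l. v l \<noteq> 0})" using A(1,2) V unfolding Defs.vec_def by auto
  ultimately have "finite {l. x l \<noteq> 0}" by (rule finite_subset)
  moreover have "\<forall>l. x l \<in> R"
  proof
    fix l
    have "\<forall>v\<in>A. f v * v l \<in> R" using A(2,3) V R sr_mult unfolding Defs.vec_def by blast
    then show "x l \<in> R" using A(4) sr_sum[OF R] by simp
  qed
  ultimately show ?thesis unfolding Defs.vec_def by simp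
qed

lemma vprod_alt:
  assumes "finite X" "{i. x i \<noteq> 0} \<subseteq> X" "finite Y" "{j. y j \<noteq> 0} \<subseteq> Y"
  shows "vprod c n x y l = (\<Sum>i\<in>X. \<Sum>j\<in>Y. x i * y j * c n i j l)"
proof -
  have fy: "finite {j. y j \<noteq> 0}" using assms(3,4) by (rule finite_subset[rotated])
  have "vprod c n x y l = (\<Sum>i\<in>{i. x i \<noteq> 0}. \<Sum>j\<in>Y. x i * y j * c n i j l)"
    unfolding vprod_def
    by (rule sum.cong[OF refl], rule sum.mono_neutral_left) (use assms in auto)
  also have "\<dots> = (\<Sum>i\<in>X. \<Sum>j\<in>Y. x i * y j * c n i j l)"
    by (rule sum.mono_neutral_left) (use assms in auto)
  finally show ?thesis .
qed

lemma vprod_nz: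
  assumes "vprod c n x y l \<noteq> 0"
  shows "\<exists>i j. x i \<noteq> 0 \<and> y j \<noteq> 0 \<and> c n i j l \<noteq> 0"
proof -
  from assms have "(\<Sum>i\<in>{i. x i \<noteq> 0}. \<Sum>j\<in>{j. y j \<noteq> 0}. x i * y j * c n i j l) \<noteq> 0"
    unfolding vprod_def by simp
  then obtain i where i: "i \<in> {i. x i \<noteq> 0}" "(\<Sum>j\<in>{j. y j \<noteq> 0}. x i * y j * c n i j l) \<noteq> 0"
    by (rule sum.not_neutral_contains_not_neutral)
  from i(2) obtain j where j: "j \<in> {j. y j \<noteq> 0}" "x i * y j * c n i j l \<noteq> 0"
    by (rule sum.not_neutral_contains_not_neutral)
  from i j show ?thesis by (cases "c n i j l = 0") auto
qed

lemma FK_sum2: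
  assumes "finite X" "finite Y" "\<forall>i\<in>X. \<forall>j\<in>Y. t i j \<in> FK K"
  shows "(\<Sum>i\<in>X. \<Sum>j\<in>Y. t i j) \<in> FK K \<and> lim_inf (\<Sum>i\<in>X. \<Sum>j\<in>Y. t i j) = (\<Sum>i\<in>X. \<Sum>j\<in>Y. lim_inf (t i j))"
proof -
  have inner: "\<forall>i\<in>X. (\<Sum>j\<in>Y. t i j) \<in> FK K \<and> lim_inf (\<Sum>j\<in>Y. t i j) = (\<Sum>j\<in>Y. lim_inf (t i j))"
    using FK_sum[OF assms(2)] assms(3) by blast
  then have "\<forall>i\<in>X. (\<Sum>j\<in>Y. t i j) \<in> FK K" by blast
  from FK_sum[OF assms(1) this] inner show ?thesis by simp
qed

locale dfam =
  fixes K :: "complex set" and c :: "int \<Rightarrow> 'b \<Rightarrow> 'b \<Rightarrow> 'b \<Rightarrow> ratfun"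
    and vac :: "'b \<Rightarrow> ratfun" and wt :: "'b \<Rightarrow> nat"
  assumes df: "deformable_family K c vac wt"
begin

lemma isva: "is_VA (FK K) c vac" using df unfolding deformable_family_def by simp
lemma cR0: "\<forall>n i j l. c n i j l \<in> FK K" by (rule conjunct1[OF conjunct2[OF isva[unfolded is_VA_def]]])
lemma cR: "c n i j l \<in> FK K" using cR0 by blast
lemma vacv: "vec (FK K) vac" by (rule conjunct1[OF isva[unfolded is_VA_def]])
lemma gr: "c n i j l \<noteq> 0 \<Longrightarrow> int (wt l) = int (wt i) + int (wt j) - n - 1"
  using df unfolding deformable_family_def by blast
lemma fin: "finite {i. wt i = m}" using df unfolding deformable_family_def by blast
lemma vac_wt: "vac l \<noteq> 0 \<Longrightarrow> wt l = 0" using df unfolding deformable_family_def by blast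

lemma vprod_vec:
  assumes x: "vec (FK K) x" and y: "vec (FK K) y"
  shows "vec (FK K) (vprod c n x y)"
proof -
  have "{l. vprod c n x y l \<noteq> 0} \<subseteq> (\<Union>i\<in>{i. x i \<noteq> 0}. \<Union>j\<in>{j. y j \<noteq> 0}. {l. wt l = nat (int (wt i) + int (wt j) - n - 1)})"
  proof
    fix l assume "l \<in> {l. vprod c n x y l \<noteq> 0}"
    then have "vprod c n x y l \<noteq> 0" by simp
    from vprod_nz[OF this] obtain i j where ij: "x i \<noteq> 0" "y j \<noteq> 0" "c n i j l \<noteq> 0" by (elim exE conjE)
    from arg_cong[OF gr[OF ij(3)], of nat] have "wt l = nat (int (wt i) + int (wt j) - n - 1)"
      by (simp only: nat_int)
    then show "l \<in> (\<Union>i\<in>{i. x i \<noteq> 0}. \<Union>j\<in>{j. y j \<noteq> 0}. {l. wt l = nat (int (wt i) + int (wt j) - n - 1)})"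
      using ij(1,2) by (intro UN_I[of i] UN_I[of j]) auto
  qed
  moreover have "finite (\<Union>i\<in>{i. x i \<noteq> 0}. \<Union>j\<in>{j. y j \<noteq> 0}. {l. wt l = nat (int (wt i) + int (wt j) - n - 1)})"
    using x y fin unfolding Defs.vec_def by (intro finite_UN_I) auto
  ultimately have "finite {l. vprod c n x y l \<noteq> 0}" by (rule finite_subset)
  moreover have "\<forall>l. vprod c n x y l \<in> FK K"
  proof
    fix l
    have "\<forall>i j. x i * y j * c n i j l \<in> FK K"
    proof (intro allI)
      fix i j
      have "x i \<in> FK K" "y j \<in> FK K" using x y unfolding Defs.vec_def by simp_all
      then show "x i * y j * c n i j l \<in> FK K" using cR sr_mult[OF sr_FK] by simp
    qed
    then show "vprod c n x y l \<in> FK K" unfolding vprod_def by (simp add: sr_sum[OF sr_FK])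
  qed
  ultimately show ?thesis unfolding Defs.vec_def by simp
qed

lemma vprod_hom:
  assumes hx: "homogeneous wt x" and hy: "homogeneous wt y"
  shows "homogeneous wt (vprod c n x y)"
proof -
  obtain a where a: "\<forall>l. x l \<noteq> 0 \<longrightarrow> wt l = a" using hx unfolding homogeneous_def by blast
  obtain b where b: "\<forall>l. y l \<noteq> 0 \<longrightarrow> wt l = b" using hy unfolding homogeneous_def by blast
  have "\<forall>l. vprod c n x y l \<noteq> 0 \<longrightarrow> wt l = nat (int a + int b - n - 1)"
  proof (intro allI impI)
    fix l assume "vprod c n x y l \<noteq> 0"
    from vprod_nz[OF this] obtain i j where ij: "x i \<noteq> 0" "y j \<noteq> 0" "c n i j l \<noteq> 0" by (elim exE conjE)
    from a ij(1) have "wt i = a" by simp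
    moreover from b ij(2) have "wt j = b" by simp
    ultimately show "wt l = nat (int a + int b - n - 1)" using arg_cong[OF gr[OF ij(3)], of nat]
      by (simp only: nat_int)
  qed
  then show ?thesis unfolding homogeneous_def by blast
qed

lemma lim_vprod:
  assumes x: "vec (FK K) x" and y: "vec (FK K) y"
  shows "lim_map (vprod c n x y) = vprod (lim_consts c) n (lim_map x) (lim_map y)"
proof
  fix l
  let ?X = "{i. x i \<noteq> 0}" let ?Y = "{j. y j \<noteq> 0}"
  have fX: "finite ?X" and fY: "finite ?Y" using x y unfolding Defs.vec_def by auto
  have sX: "{i. lim_map x i \<noteq> 0} \<subseteq> ?X" using FK_zero unfolding lim_map_def by auto
  have sY: "{j. lim_map y j \<noteq> 0} \<subseteq> ?Y" using FK_zero unfolding lim_map_def by auto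
  have t: "\<forall>i\<in>?X. \<forall>j\<in>?Y. x i * y j * c n i j l \<in> FK K \<and> lim_inf (x i * y j * c n i j l) = lim_inf (x i) * lim_inf (y j) * lim_inf (c n i j l)"
  proof (intro ballI)
    fix i j
    have "x i \<in> FK K" "y j \<in> FK K" using x y unfolding Defs.vec_def by simp_all
    then show "x i * y j * c n i j l \<in> FK K \<and> lim_inf (x i * y j * c n i j l) = lim_inf (x i) * lim_inf (y j) * lim_inf (c n i j l)"
      using FK_mult cR by metis
  qed
  have "lim_map (vprod c n x y) l = lim_inf (\<Sum>i\<in>?X. \<Sum>j\<in>?Y. x i * y j * c n i j l)"
    unfolding lim_map_def vprod_def by simp
  also have "\<dots> = (\<Sum>i\<in>?X. \<Sum>j\<in>?Y. lim_inf (x i * y j * c n i j l))"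
  proof -
    have "\<forall>i\<in>?X. \<forall>j\<in>?Y. x i * y j * c n i j l \<in> FK K" using t by blast
    from conjunct2[OF FK_sum2[OF fX fY this]] show ?thesis .
  qed
  also have "\<dots> = (\<Sum>i\<in>?X. \<Sum>j\<in>?Y. lim_map x i * lim_map y j * lim_consts c n i j l)"
    using t unfolding lim_map_def lim_consts_def by simp
  also have "\<dots> = vprod (lim_consts c) n (lim_map x) (lim_map y) l"
    by (rule vprod_alt[symmetric, OF fX sX fY sY])
  finally show "lim_map (vprod c n x y) l = vprod (lim_consts c) n (lim_map x) (lim_map y) l" .
qed

lemma vac_hom: "homogeneous wt vac"
  unfolding homogeneous_def by (rule exI[of _ 0]) (use vac_wt in blast)

lemma iter_props:
  assumes "vec (FK K) g" "homogeneous wt g"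
  shows "vec (FK K) ((vderiv c vac ^^ k) g) \<and> homogeneous wt ((vderiv c vac ^^ k) g)
     \<and> lim_map ((vderiv c vac ^^ k) g) = (vderiv (lim_consts c) (lim_map vac) ^^ k) (lim_map g)"
proof (induction k)
  case 0 then show ?case using assms by simp
next
  case (Suc k)
  from Suc.IH have a: "vec (FK K) ((vderiv c vac ^^ k) g)" and b: "homogeneous wt ((vderiv c vac ^^ k) g)"
    and e: "lim_map ((vderiv c vac ^^ k) g) = (vderiv (lim_consts c) (lim_map vac) ^^ k) (lim_map g)" by simp_all
  have s1: "(vderiv c vac ^^ Suc k) g = vprod c (-2) ((vderiv c vac ^^ k) g) vac" by (simp add: vderiv_def)
  have s2: "(vderiv (lim_consts c) (lim_map vac) ^^ Suc k) (lim_map g) = vprod (lim_consts c) (-2) ((vderiv (lim_consts c) (lim_map vac) ^^ k) (lim_map g)) (lim_map vac)"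
    by (simp add: vderiv_def)
  show ?case unfolding s1 s2 using vprod_vec[OF a vacv] vprod_hom[OF b vac_hom] lim_vprod[OF a vacv, of "-2"] e
    by simp
qed

lemma nomon_props:
  assumes G: "\<forall>g\<in>G. vec (FK K) g \<and> homogeneous wt g" and m: "m \<in> nomon c vac G"
  shows "vec (FK K) m \<and> homogeneous wt m"
  using m
proof (induction rule: nomon.induct)
  case (gen g k)
  from G gen have gv: "vec (FK K) g" and gh: "homogeneous wt g" by auto
  from iter_props[OF gv gh, of k] show ?case by simp
next
  case (prod g m k)
  from G prod have gv: "vec (FK K) g" and gh: "homogeneous wt g" by auto
  from iter_props[OF gv gh, of k] have iv: "vec (FK K) ((vderiv c vac ^^ k) g)"
    and ih: "homogeneous wt ((vderiv c vac ^^ k) g)" by simp_all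
  from prod.IH have mv: "vec (FK K) m" and mh: "homogeneous wt m" by simp_all
  show ?case using vprod_vec[OF iv mv] vprod_hom[OF ih mh] by simp
qed

lemma nomon_lim:
  assumes G: "\<forall>g\<in>G. vec (FK K) g \<and> homogeneous wt g"
    and m: "m \<in> nomon (lim_consts c) (lim_map vac) (lim_map ` G)"
  shows "\<exists>w \<in> nomon c vac G. lim_map w = m"
  using m
proof (induction rule: nomon.induct)
  case (gen g' k)
  then obtain g where g: "g \<in> G" "g' = lim_map g" by blast
  from G g have gv: "vec (FK K) g" and gh: "homogeneous wt g" by auto
  from iter_props[OF gv gh, of k] have e: "lim_map ((vderiv c vac ^^ k) g) = (vderiv (lim_consts c) (lim_map vac) ^^ k) g'"
    using g(2) by simp
  have mem: "(vderiv c vac ^^ k) g \<in> nomon c vac G" by (rule nomon.gen[OF g(1)])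
  show ?case by (rule bexI[where x="(vderiv c vac ^^ k) g"]) (rule e, rule mem)
next
  case (prod g' m k)
  then obtain g where g: "g \<in> G" "g' = lim_map g" by blast
  from G g have gv: "vec (FK K) g" and gh: "homogeneous wt g" by auto
  from prod.IH obtain w where w: "w \<in> nomon c vac G" "lim_map w = m" by blast
  have wv: "vec (FK K) w" using nomon_props[OF G w(1)] by simp
  from iter_props[OF gv gh, of k] have iv: "vec (FK K) ((vderiv c vac ^^ k) g)"
    and il: "lim_map ((vderiv c vac ^^ k) g) = (vderiv (lim_consts c) (lim_map vac) ^^ k) g'"
    using g(2) by simp_all
  have e: "lim_map (vprod c (-1) ((vderiv c vac ^^ k) g) w) = vprod (lim_consts c) (-1) ((vderiv (lim_consts c) (lim_map vac) ^^ k) g') m"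
    using lim_vprod[OF iv wv, of "-1"] il w(2) by simp
  have mem: "vprod c (-1) ((vderiv c vac ^^ k) g) w \<in> nomon c vac G" by (rule nomon.prod[OF g(1) w(1)])
  show ?case by (rule bexI[where x="vprod c (-1) ((vderiv c vac ^^ k) g) w"]) (rule e, rule mem)
qed

end


lemma sr_pow: "sr R \<Longrightarrow> x \<in> R \<Longrightarrow> x ^ m \<in> R"
  by (induction m) (simp_all add: sr_def)

lemma det_FK:
  assumes A: "A \<in> carrier_mat n n" and e: "\<forall>i<n. \<forall>j<n. A $$ (i,j) \<in> FK K"
  shows "det A \<in> FK K \<and> lim_inf (det A) = det (map_mat lim_inf A)"
proof -
  let ?P = "{p. p permutes {0..<n}}"
  have fP: "finite ?P" by (rule finite_permutations) simp
  have tm: "\<forall>p\<in>?P. of_int (sign p) * (\<Prod>i=0..<n. A $$ (i, p i)) \<in> FK K \<and>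
      lim_inf (of_int (sign p) * (\<Prod>i=0..<n. A $$ (i, p i))) = of_int (sign p) * (\<Prod>i=0..<n. lim_inf (A $$ (i, p i)))"
  proof
    fix p assume "p \<in> ?P"
    then have pp: "p permutes {0..<n}" by simp
    have pi: "\<forall>i\<in>{0..<n}. A $$ (i, p i) \<in> FK K"
    proof
      fix i assume i: "i \<in> {0..<n}"
      then have "p i \<in> {0..<n}" using permutes_in_image[OF pp] by simp
      with i e show "A $$ (i, p i) \<in> FK K" by simp
    qed
    have pr: "(\<Prod>i=0..<n. A $$ (i, p i)) \<in> FK K \<and> lim_inf (\<Prod>i=0..<n. A $$ (i, p i)) = (\<Prod>i=0..<n. lim_inf (A $$ (i, p i)))"
      by (rule FK_prod[OF _ pi]) simp
    have sg: "(of_int (sign p) :: ratfun) \<in> FK K \<and> lim_inf (of_int (sign p) :: ratfun) = of_int (sign p)"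
      by (rule FK_of_int)
    from FK_mult[OF conjunct1[OF sg] conjunct1[OF pr]] sg pr
    show "of_int (sign p) * (\<Prod>i=0..<n. A $$ (i, p i)) \<in> FK K \<and>
      lim_inf (of_int (sign p) * (\<Prod>i=0..<n. A $$ (i, p i))) = of_int (sign p) * (\<Prod>i=0..<n. lim_inf (A $$ (i, p i)))"
      by simp
  qed
  have tm1: "\<forall>p\<in>?P. of_int (sign p) * (\<Prod>i=0..<n. A $$ (i, p i)) \<in> FK K" using tm by blast
  have s: "det A \<in> FK K \<and> lim_inf (det A) = (\<Sum>p\<in>?P. lim_inf (of_int (sign p) * (\<Prod>i=0..<n. A $$ (i, p i))))"
    unfolding det_def'[OF A] by (rule FK_sum[OF fP tm1])
  have MA: "map_mat lim_inf A \<in> carrier_mat n n" using A by simp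
  have "det (map_mat lim_inf A) = (\<Sum>p\<in>?P. of_int (sign p) * (\<Prod>i=0..<n. map_mat lim_inf A $$ (i, p i)))"
    by (rule det_def'[OF MA])
  also have "\<dots> = (\<Sum>p\<in>?P. of_int (sign p) * (\<Prod>i=0..<n. lim_inf (A $$ (i, p i))))"
  proof (rule sum.cong[OF refl])
    fix p assume "p \<in> ?P"
    then have pp: "p permutes {0..<n}" by simp
    have "(\<Prod>i=0..<n. map_mat lim_inf A $$ (i, p i)) = (\<Prod>i=0..<n. lim_inf (A $$ (i, p i)))"
    proof (rule prod.cong[OF refl])
      fix i assume i: "i \<in> {0..<n}"
      then have "p i \<in> {0..<n}" using permutes_in_image[OF pp] by simp
      with i A show "map_mat lim_inf A $$ (i, p i) = lim_inf (A $$ (i, p i))" by simp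
    qed
    then show "of_int (sign p) * (\<Prod>i=0..<n. map_mat lim_inf A $$ (i, p i)) = of_int (sign p) * (\<Prod>i=0..<n. lim_inf (A $$ (i, p i)))"
      by simp
  qed
  also have "\<dots> = (\<Sum>p\<in>?P. lim_inf (of_int (sign p) * (\<Prod>i=0..<n. A $$ (i, p i))))"
    using tm by simp
  finally show ?thesis using s by simp
qed

lemma adj_FK:
  assumes A: "A \<in> carrier_mat n n" and e: "\<forall>i<n. \<forall>j<n. A $$ (i,j) \<in> FK K"
    and k: "k < n" and c: "c < n"
  shows "adj_mat A $$ (k,c) \<in> FK K"
proof -
  have D: "mat_delete A c k \<in> carrier_mat (n-1) (n-1)" by (rule mat_delete_carrier[OF A])
  have De: "\<forall>i<n-1. \<forall>j<n-1. mat_delete A c k $$ (i,j) \<in> FK K"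
  proof (intro allI impI)
    fix i j assume ij: "i < n - 1" "j < n - 1"
    have "mat_delete A c k $$ (i,j) = A $$ (if i < c then i else Suc i, if j < k then j else Suc j)"
      unfolding mat_delete_def using ij A by simp
    moreover have "(if i < c then i else Suc i) < n" "(if j < k then j else Suc j) < n" using ij by auto
    ultimately show "mat_delete A c k $$ (i,j) \<in> FK K" using e by simp
  qed
  have dK: "det (mat_delete A c k) \<in> FK K" using det_FK[OF D De] by simp
  have m1: "(-1 :: ratfun) \<in> FK K" using FK_uminus[OF conjunct1[OF FK_one]] by simp
  have "adj_mat A $$ (k,c) = (-1)^(c+k) * det (mat_delete A c k)"
    unfolding adj_mat_def cofactor_def using A k c by simp
  then show ?thesis using sr_mult[OF sr_FK sr_pow[OF sr_FK m1] dK] by simp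
qed

lemma mat_step:
  fixes u :: "'b \<Rightarrow> 'b \<Rightarrow> ratfun"
  assumes fL: "finite L"
    and uK: "\<forall>k\<in>L. \<forall>l'. u k l' \<in> FK K"
    and u0: "\<forall>k\<in>L. \<forall>l'. l' \<notin> L \<longrightarrow> u k l' = 0"
    and ul: "\<forall>k\<in>L. \<forall>l'\<in>L. lim_inf (u k l') = (if l' = k then 1 else 0)"
  shows "\<exists>Z. finite Z \<and> (\<forall>l\<in>L. \<exists>g. (\<forall>k\<in>L. g k \<in> FK (K \<union> Z)) \<and>
            (\<lambda>l'. if l' = l then 1 else 0) = (\<lambda>l'. \<Sum>k\<in>L. g k * u k l'))"
proof -
  obtain ls where ls: "set ls = L" "distinct ls" using finite_distinct_list[OF fL] by blast
  define d where "d = length ls"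
  have bij: "bij_betw ((!) ls) {..<d} L" using bij_betw_nth[OF ls(2) _ ls(1)[symmetric]] d_def by simp
  have inL: "\<forall>r<d. ls!r \<in> L" using ls d_def nth_mem by auto
  have nth_eq: "\<And>r k. r < d \<Longrightarrow> k < d \<Longrightarrow> (ls!r = ls!k) = (r = k)"
    using ls(2) d_def nth_eq_iff_index_eq by auto
  define Q where "Q = mat d d (\<lambda>(r,k). u (ls!k) (ls!r))"
  have Qc: "Q \<in> carrier_mat d d" unfolding Q_def by simp
  have QK: "\<forall>r<d. \<forall>k<d. Q $$ (r,k) \<in> FK K" using uK inL unfolding Q_def by simp
  have Qlim: "map_mat lim_inf Q = 1\<^sub>m d"
  proof (rule eq_matI)
    fix r k assume "r < dim_row (1\<^sub>m d :: complex mat)" "k < dim_col (1\<^sub>m d :: complex mat)"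
    then have rk: "r < d" "k < d" by simp_all
    have "lim_inf (u (ls!k) (ls!r)) = (if ls!r = ls!k then 1 else 0)" using ul inL rk by simp
    then show "map_mat lim_inf Q $$ (r,k) = 1\<^sub>m d $$ (r,k)" using rk nth_eq[OF rk] unfolding Q_def by simp
  qed (simp_all add: Q_def)
  from det_FK[OF Qc QK] Qlim have DK: "det Q \<in> FK K" and D1: "lim_inf (det Q) = 1" by simp_all
  obtain Z where Z: "finite Z" "inverse (det Q) \<in> FK (K \<union> Z)" using FK_inv[OF DK] D1 by auto
  have D0: "det Q \<noteq> 0" using D1 FK_zero by auto
  have sub: "FK K \<subseteq> FK (K \<union> Z)" by (rule FK_mono) auto
  define Ad where "Ad = adj_mat Q"
  have Adc: "Ad \<in> carrier_mat d d" unfolding Ad_def by (rule adj_mat(1)[OF Qc])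
  have adjK: "\<And>k c. k < d \<Longrightarrow> c < d \<Longrightarrow> Ad $$ (k,c) \<in> FK K" unfolding Ad_def using adj_FK[OF Qc QK] by blast
  have prod: "Q * Ad = det Q \<cdot>\<^sub>m 1\<^sub>m d" unfolding Ad_def by (rule adj_mat(2)[OF Qc])
  have key: "\<And>r c. r < d \<Longrightarrow> c < d \<Longrightarrow> (\<Sum>k\<in>{0..<d}. Q $$ (r,k) * Ad $$ (k,c)) = (if r = c then det Q else 0)"
  proof -
    fix r c assume rc: "r < d" "c < d"
    have "(Q * Ad) $$ (r,c) = (det Q \<cdot>\<^sub>m 1\<^sub>m d) $$ (r,c)" using prod by simp
    then show "(\<Sum>k\<in>{0..<d}. Q $$ (r,k) * Ad $$ (k,c)) = (if r = c then det Q else 0)"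
      using rc Qc Adc by (simp add: scalar_prod_def)
  qed
  define idx where "idx = the_inv_into {..<d} ((!) ls)"
  have inj: "inj_on ((!) ls) {..<d}" using bij bij_betw_def by blast
  have idx_nth: "\<And>k. k < d \<Longrightarrow> idx (ls!k) = k" unfolding idx_def using the_inv_into_f_f[OF inj] by simp
  show ?thesis
  proof (intro exI[of _ Z] conjI ballI)
    show "finite Z" by (rule Z(1))
    fix l assume l: "l \<in> L"
    obtain c where c: "c < d" "ls!c = l" using l ls d_def by (metis in_set_conv_nth)
    define g where "g k = Ad $$ (idx k, c) * inverse (det Q)" for k
    show "\<exists>g. (\<forall>k\<in>L. g k \<in> FK (K \<union> Z)) \<and> (\<lambda>l'. if l' = l then 1 else 0) = (\<lambda>l'. \<Sum>k\<in>L. g k * u k l')"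
    proof (intro exI[of _ g] conjI ballI)
      fix k assume k: "k \<in> L"
      then obtain r where r: "r < d" "k = ls!r" using bij unfolding bij_betw_def by auto
      have "Ad $$ (idx k, c) \<in> FK (K \<union> Z)" using adjK[OF _ c(1), of r] r idx_nth sub by auto
      then show "g k \<in> FK (K \<union> Z)" unfolding g_def using sr_mult[OF sr_FK _ Z(2)] by blast
    next
      show "(\<lambda>l'. if l' = l then 1 else 0) = (\<lambda>l'. \<Sum>k\<in>L. g k * u k l')"
      proof
        fix l'
        have conv: "(\<Sum>k\<in>L. g k * u k l') = (\<Sum>k\<in>{..<d}. g (ls!k) * u (ls!k) l')"
          by (rule sum.reindex_bij_betw[OF bij, symmetric])
        show "(if l' = l then 1 else 0) = (\<Sum>k\<in>L. g k * u k l')"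
        proof (cases "l' \<in> L")
          case False
          then have "\<forall>k\<in>L. u k l' = 0" using u0 by blast
          moreover have "l' \<noteq> l" using False l by auto
          ultimately show ?thesis by simp
        next
          case True
          then obtain r where r: "r < d" "l' = ls!r" using bij unfolding bij_betw_def by auto
          have "(\<Sum>k\<in>{..<d}. g (ls!k) * u (ls!k) l') = (\<Sum>k\<in>{0..<d}. inverse (det Q) * (Q $$ (r,k) * Ad $$ (k,c)))"
          proof (rule sum.cong)
            show "{..<d} = {0..<d}" by auto
          next
            fix k assume "k \<in> {0..<d}"
            then have k: "k < d" by simp
            show "g (ls!k) * u (ls!k) l' = inverse (det Q) * (Q $$ (r,k) * Ad $$ (k,c))"
              unfolding g_def Q_def using k r idx_nth[OF k] by (simp add: algebra_simps)
          qed
          also have "\<dots> = inverse (det Q) * (if r = c then det Q else 0)"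
            by (simp add: sum_distrib_left[symmetric] key[OF r(1) c(1)])
          also have "\<dots> = (if l' = l then 1 else 0)"
            using D0 r c nth_eq[OF r(1) c(1)] by simp
          finally show ?thesis using conv by simp
        qed
      qed
    qed
  qed
qed



theorem mainTheorem8:
  fixes K :: "complex set"
    and c :: "int \<Rightarrow> 'b \<Rightarrow> 'b \<Rightarrow> 'b \<Rightarrow> ratfun" and vac :: "'b \<Rightarrow> ratfun" and wt :: "'b \<Rightarrow> nat"
    and I :: "'i set" and a :: "'i \<Rightarrow> 'b \<Rightarrow> ratfun"
  assumes "countable K"
    and "deformable_family K c vac wt"
    and "\<forall>i\<in>I. vec (FK K) (a i) \<and> homogeneous wt (a i)"
    and "strongly_generates (UNIV :: complex set) (lim_consts c) (lim_map vac) (lim_map ` a ` I)"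
  shows "\<exists>S. K \<subseteq> S \<and> countable S \<and> strongly_generates (FK S) c vac (a ` I)"
proof -
  interpret dfam K c vac wt by unfold_locales (rule assms(2))
  let ?G = "a ` I"
  let ?W = "insert vac (nomon c vac ?G)"
  have G: "\<forall>g\<in>?G. vec (FK K) g \<and> homogeneous wt g" using assms(3) by auto
  have W: "\<forall>w\<in>?W. vec (FK K) w \<and> homogeneous wt w"
  proof
    fix w assume "w \<in> ?W"
    then have "w = vac \<or> w \<in> nomon c vac ?G" by simp
    then show "vec (FK K) w \<and> homogeneous wt w"
    proof
      assume "w = vac" then show ?thesis using vacv vac_hom by simp
    next
      assume "w \<in> nomon c vac ?G" then show ?thesis by (rule nomon_props[OF G])
    qed
  qed
  have Wv: "\<forall>w\<in>?W. vec (FK K) w" using W by simp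
  have step4: "\<forall>l. \<exists>u. u \<in> rspan (FK K) ?W \<and> (\<forall>l'. u l' \<noteq> 0 \<longrightarrow> wt l' = wt l)
      \<and> (\<forall>l'. lim_inf (u l') = (if l' = l then 1 else 0))"
  proof
    fix l :: 'b
    define \<delta> where "\<delta> = (\<lambda>l'. if l' = l then (1::complex) else 0)"
    have "{l'. \<delta> l' \<noteq> 0} = {l}" unfolding \<delta>_def by auto
    then have "vec UNIV \<delta>" unfolding Defs.vec_def by simp
    moreover have eq4: "rspan UNIV (insert (lim_map vac) (nomon (lim_consts c) (lim_map vac) (lim_map ` ?G))) = {x. vec (UNIV::complex set) x}"
      using assms(4) unfolding strongly_generates_def by (rule sym)
    ultimately have "\<delta> \<in> rspan UNIV (insert (lim_map vac) (nomon (lim_consts c) (lim_map vac) (lim_map ` ?G)))"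
      unfolding eq4 by simp
    then obtain A f where A: "finite A" "A \<subseteq> insert (lim_map vac) (nomon (lim_consts c) (lim_map vac) (lim_map ` ?G))"
      "\<delta> = (\<lambda>l. \<Sum>v\<in>A. f v * v l)" unfolding rspan_def by blast
    have pre: "\<forall>v\<in>A. \<exists>w. w \<in> ?W \<and> lim_map w = v"
    proof
      fix v assume "v \<in> A"
      then have "v = lim_map vac \<or> v \<in> nomon (lim_consts c) (lim_map vac) (lim_map ` ?G)" using A(2) by auto
      then show "\<exists>w. w \<in> ?W \<and> lim_map w = v"
      proof
        assume "v = lim_map vac" then show ?thesis by auto
      next
        assume "v \<in> nomon (lim_consts c) (lim_map vac) (lim_map ` ?G)"
        from nomon_lim[OF G this] obtain w where "w \<in> nomon c vac ?G" "lim_map w = v" by (elim bexE)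
        then show ?thesis by auto
      qed
    qed
    obtain w where w: "\<forall>v\<in>A. w v \<in> ?W \<and> lim_map (w v) = v" using bchoice[OF pre] by (elim exE)
    define m where "m = wt l"
    define A' where "A' = {v\<in>A. \<forall>l'. w v l' \<noteq> 0 \<longrightarrow> wt l' = m}"
    define u where "u = (\<lambda>l'. \<Sum>v\<in>A'. Fract [:f v:] 1 * w v l')"
    have fA': "finite A'" using A(1) A'_def by simp
    have A'A: "A' \<subseteq> A" unfolding A'_def by auto
    have "u \<in> rspan (FK K) ?W" unfolding u_def
    proof (rule rspan_sum[OF sr_FK fA'])
      show "\<forall>k\<in>A'. Fract [:f k:] 1 \<in> FK K" using FK_const by blast
      show "\<forall>k\<in>A'. w k \<in> rspan (FK K) ?W"
      proof
        fix k assume "k \<in> A'"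
        then have "w k \<in> ?W" using w A'A by auto
        then show "w k \<in> rspan (FK K) ?W" by (rule rspan_base[OF sr_FK])
      qed
    qed
    moreover have "\<forall>l'. u l' \<noteq> 0 \<longrightarrow> wt l' = wt l"
    proof (intro allI impI)
      fix l' assume "u l' \<noteq> 0"
      then have "(\<Sum>v\<in>A'. Fract [:f v:] 1 * w v l') \<noteq> 0" unfolding u_def by simp
      then obtain v where v: "v \<in> A'" "Fract [:f v:] 1 * w v l' \<noteq> 0"
        by (rule sum.not_neutral_contains_not_neutral)
      then have "w v l' \<noteq> 0" by auto
      with v(1) show "wt l' = wt l" unfolding A'_def m_def by auto
    qed
    moreover have "\<forall>l'. lim_inf (u l') = (if l' = l then 1 else 0)"
    proof
      fix l'
      have wK: "\<forall>v\<in>A'. w v l' \<in> FK K" using w A'A W unfolding Defs.vec_def by blast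
      have tK: "\<forall>v\<in>A'. Fract [:f v:] 1 * w v l' \<in> FK K \<and> lim_inf (Fract [:f v:] 1 * w v l') = f v * v l'"
      proof
        fix v assume v: "v \<in> A'"
        have "lim_inf (w v l') = v l'" using w v A'A unfolding lim_map_def by (metis subsetD)
        then show "Fract [:f v:] 1 * w v l' \<in> FK K \<and> lim_inf (Fract [:f v:] 1 * w v l') = f v * v l'"
          using FK_mult[OF conjunct1[OF FK_const] bspec[OF wK v]] FK_const by simp
      qed
      have tK1: "\<forall>v\<in>A'. Fract [:f v:] 1 * w v l' \<in> FK K" using tK by blast
      have "lim_inf (u l') = (\<Sum>v\<in>A'. lim_inf (Fract [:f v:] 1 * w v l'))"
        unfolding u_def using FK_sum[OF fA' tK1] by simp
      also have "\<dots> = (\<Sum>v\<in>A'. f v * v l')" using tK by simp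
      also have "\<dots> = \<delta> l'"
      proof (cases "wt l' = m")
        case True
        have "(\<Sum>v\<in>A'. f v * v l') = (\<Sum>v\<in>A. f v * v l')"
        proof (rule sum.mono_neutral_left[OF A(1) A'A], rule ballI)
          fix v assume v: "v \<in> A - A'"
          then obtain l'' where l'': "w v l'' \<noteq> 0" "wt l'' \<noteq> m" unfolding A'_def by auto
          have "homogeneous wt (w v)" using w v W by auto
          then obtain mv where mv: "\<forall>l. w v l \<noteq> 0 \<longrightarrow> wt l = mv" unfolding homogeneous_def by blast
          have "w v l' = 0"
          proof (rule ccontr)
            assume "w v l' \<noteq> 0"
            then have "wt l' = mv" using mv by simp
            moreover have "wt l'' = mv" using mv l''(1) by simp
            ultimately show False using True l''(2) by simp
          qed
          moreover have "lim_inf (w v l') = v l'" using w v unfolding lim_map_def by (metis DiffD1)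
          ultimately have "v l' = 0" using FK_zero by simp
          then show "f v * v l' = 0" by simp
        qed
        then show ?thesis using A(3) by simp
      next
        case False
        have "\<forall>v\<in>A'. v l' = 0"
        proof
          fix v assume v: "v \<in> A'"
          then have "w v l' = 0" using False unfolding A'_def by auto
          moreover have "lim_inf (w v l') = v l'" using w v A'A unfolding lim_map_def by (metis subsetD)
          ultimately show "v l' = 0" using FK_zero by simp
        qed
        then have "(\<Sum>v\<in>A'. f v * v l') = 0" by (intro sum.neutral) simp
        moreover have "l' \<noteq> l" using False m_def by auto
        ultimately show ?thesis unfolding \<delta>_def by simp
      qed
      finally show "lim_inf (u l') = (if l' = l then 1 else 0)" unfolding \<delta>_def .
    qed
    ultimately show "\<exists>u. u \<in> rspan (FK K) ?W \<and> (\<forall>l'. u l' \<noteq> 0 \<longrightarrow> wt l' = wt l)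
      \<and> (\<forall>l'. lim_inf (u l') = (if l' = l then 1 else 0))" by blast
  qed
  obtain U where U: "\<forall>l. U l \<in> rspan (FK K) ?W \<and> (\<forall>l'. U l l' \<noteq> 0 \<longrightarrow> wt l' = wt l)
      \<and> (\<forall>l'. lim_inf (U l l') = (if l' = l then 1 else 0))" using choice[OF step4] by (elim exE)
  have UK: "\<forall>l l'. U l l' \<in> FK K"
  proof (intro allI)
    fix l l'
    have "vec (FK K) (U l)" using rspan_vec[OF sr_FK Wv] U by blast
    then show "U l l' \<in> FK K" unfolding Defs.vec_def by simp
  qed
  have step5: "\<forall>m. \<exists>Z. finite Z \<and> (\<forall>l\<in>{l. wt l = m}. \<exists>g. (\<forall>k\<in>{l. wt l = m}. g k \<in> FK (K \<union> Z)) \<and>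
            (\<lambda>l'. if l' = l then 1 else 0) = (\<lambda>l'. \<Sum>k\<in>{l. wt l = m}. g k * U k l'))"
  proof
    fix m
    show "\<exists>Z. finite Z \<and> (\<forall>l\<in>{l. wt l = m}. \<exists>g. (\<forall>k\<in>{l. wt l = m}. g k \<in> FK (K \<union> Z)) \<and>
            (\<lambda>l'. if l' = l then 1 else 0) = (\<lambda>l'. \<Sum>k\<in>{l. wt l = m}. g k * U k l'))"
    proof (rule mat_step[OF fin])
      show "\<forall>k\<in>{l. wt l = m}. \<forall>l'. U k l' \<in> FK K" using UK by blast
      show "\<forall>k\<in>{l. wt l = m}. \<forall>l'. l' \<notin> {l. wt l = m} \<longrightarrow> U k l' = 0" using U by auto
      show "\<forall>k\<in>{l. wt l = m}. \<forall>l'\<in>{l. wt l = m}. lim_inf (U k l') = (if l' = k then 1 else 0)" using U by auto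
    qed
  qed
  obtain Zf where Zf: "\<forall>m. finite (Zf m) \<and> (\<forall>l\<in>{l. wt l = m}. \<exists>g. (\<forall>k\<in>{l. wt l = m}. g k \<in> FK (K \<union> Zf m)) \<and>
            (\<lambda>l'. if l' = l then 1 else 0) = (\<lambda>l'. \<Sum>k\<in>{l. wt l = m}. g k * U k l'))"
    using choice[OF step5] by (elim exE)
  define S where "S = K \<union> (\<Union>m. Zf m)"
  have KS: "K \<subseteq> S" unfolding S_def by auto
  have cS: "countable S" unfolding S_def
    using assms(1) Zf by (intro countable_Un countable_UN) (auto intro: countable_finite)
  have RS: "FK K \<subseteq> FK S" by (rule FK_mono[OF KS])
  have US: "\<forall>k. U k \<in> rspan (FK S) ?W" using U rspan_mono[OF RS] by blast
  have e: "\<forall>l. (\<lambda>l'. if l' = l then 1 else 0) \<in> rspan (FK S) ?W"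
  proof
    fix l :: 'b
    from Zf have "\<exists>g. (\<forall>k\<in>{l'. wt l' = wt l}. g k \<in> FK (K \<union> Zf (wt l))) \<and>
            (\<lambda>l'. if l' = l then 1 else 0) = (\<lambda>l'. \<Sum>k\<in>{l'. wt l' = wt l}. g k * U k l')" by blast
    then obtain g where g: "\<forall>k\<in>{l'. wt l' = wt l}. g k \<in> FK (K \<union> Zf (wt l))"
      "(\<lambda>l'. if l' = l then 1 else 0) = (\<lambda>l'. \<Sum>k\<in>{l'. wt l' = wt l}. g k * U k l')" by (elim exE conjE)
    have "FK (K \<union> Zf (wt l)) \<subseteq> FK S" unfolding S_def by (rule FK_mono) auto
    then have gS: "\<forall>k\<in>{l'. wt l' = wt l}. g k \<in> FK S" using g(1) by blast
    have "(\<lambda>l'. \<Sum>k\<in>{l'. wt l' = wt l}. g k * U k l') \<in> rspan (FK S) ?W"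
      by (rule rspan_sum[OF sr_FK fin gS]) (use US in blast)
    then show "(\<lambda>l'. if l' = l then 1 else 0) \<in> rspan (FK S) ?W" using g(2) by simp
  qed
  have "strongly_generates (FK S) c vac ?G"
    unfolding strongly_generates_def
  proof
    show "{x. vec (FK S) x} \<subseteq> rspan (FK S) ?W"
    proof
      fix x :: "'b \<Rightarrow> ratfun" assume "x \<in> {x. vec (FK S) x}"
      then have x: "vec (FK S) x" by simp
      let ?X = "{l. x l \<noteq> 0}"
      have fX: "finite ?X" and xS: "\<forall>l. x l \<in> FK S" using x unfolding Defs.vec_def by auto
      have "(\<lambda>l'::'b. \<Sum>l\<in>?X. x l * (\<lambda>l'. if l' = l then 1 else 0) l') \<in> rspan (FK S) ?W"
        by (rule rspan_sum[OF sr_FK fX]) (use xS e in blast)+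
      moreover have "(\<lambda>l'::'b. \<Sum>l\<in>?X. x l * (\<lambda>l'. if l' = l then 1 else 0) l') = x"
      proof
        fix l' :: 'b
        have "(\<Sum>l\<in>?X. x l * (\<lambda>l'. if l' = l then 1 else 0) l') = (\<Sum>l\<in>?X. if l = l' then x l else 0)"
          by (rule sum.cong) auto
        also have "\<dots> = x l'" using fX by (simp add: sum.delta')
        finally show "(\<Sum>l\<in>?X. x l * (\<lambda>l'. if l' = l then 1 else 0) l') = x l'" .
      qed
      ultimately show "x \<in> rspan (FK S) ?W" by simp
    qed
  next
    show "rspan (FK S) ?W \<subseteq> {x. vec (FK S) x}"
    proof
      fix x :: "'b \<Rightarrow> ratfun" assume "x \<in> rspan (FK S) ?W"
      moreover have "\<forall>v\<in>?W. vec (FK S) v" using Wv vec_mono[OF RS] by blast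
      ultimately show "x \<in> {x. vec (FK S) x}" using rspan_vec[OF sr_FK] by blast
    qed
  qed
  then show ?thesis using KS cS by blast
qed


end
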